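(* Unambiguous NPWs are not Büchi-type with respect to DBW-realizable languages: there exists an unambiguous nondeterministic parity word automaton $\mathcal{A}=\langle\Sigma,Q,Q_0,\delta,\alpha\rangle$ such that $L(\mathcal{A})$ is recognized by some deterministic Büchi word automaton, yet there is no set $\alpha'\subseteq Q$ such that the Büchi automaton $\langle\Sigma,Q,Q_0,\delta,\alpha'\rangle$ recognizes $L(\mathcal{A})$.
   Context: An automaton $\langle\Sigma,Q,Q_0,\delta,\alpha\rangle$ has transition function $\delta:Q\times\Sigma\to2^Q$; a run on $w=a_1a_2\cdots$ is $r_0r_1\cdots$ with $r_0\in Q_0$, $r_{i+1}\in\delta(r_i,a_{i+1})$. Parity condition: $\alpha:Q\to\{0,\ldots,k\}$, a run is accepting iff the least priority of a state visited infinitely often is even. Büchi condition: $\alpha\subseteq Q$, a run is accepting iff it visits $\alpha$ infinitely often. An automaton is deterministic if $|Q_0|=1$ and $|\delta(q,a)|\le1$ for all $q,a$, and unambiguous if every accepted word has exactly one accepting run. NPW = nondeterministic parity word automaton; DBW = deterministic Büchi word automaton. *)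

theory Defs
  imports Main
begin

text \<open>Automaton structure <Sigma, Q, Q0, delta> (acceptance condition kept separate).
  Infinite words are functions nat => 'a; w i is the letter a_(i+1).\<close>

record ('a, 'q) automaton =
  alph   :: "'a set"
  states :: "'q set"
  init   :: "'q set"
  trans  :: "'q \<Rightarrow> 'a \<Rightarrow> 'q set"

definition well_formed :: "('a, 'q) automaton \<Rightarrow> bool" where
  "well_formed A \<longleftrightarrow> finite (alph A) \<and> finite (states A) \<and> init A \<subseteq> states A \<and>
     (\<forall>q\<in>states A. \<forall>a\<in>alph A. trans A q a \<subseteq> states A)"

definition is_word :: "('a, 'q) automaton \<Rightarrow> (nat \<Rightarrow> 'a) \<Rightarrow> bool" where
  "is_word A w \<longleftrightarrow> (\<forall>i. w i \<in> alph A)"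

definition is_run :: "('a, 'q) automaton \<Rightarrow> (nat \<Rightarrow> 'a) \<Rightarrow> (nat \<Rightarrow> 'q) \<Rightarrow> bool" where
  "is_run A w r \<longleftrightarrow> r 0 \<in> init A \<and> (\<forall>i. r (Suc i) \<in> trans A (r i) (w i))"

definition inf_visited :: "(nat \<Rightarrow> 'q) \<Rightarrow> 'q \<Rightarrow> bool" where
  "inf_visited r q \<longleftrightarrow> (\<exists>\<^sub>\<infinity>i. r i = q)"

definition parity_acc :: "('q \<Rightarrow> nat) \<Rightarrow> (nat \<Rightarrow> 'q) \<Rightarrow> bool" where
  "parity_acc \<alpha> r \<longleftrightarrow>
     (\<exists>q. inf_visited r q \<and> even (\<alpha> q) \<and> (\<forall>q'. inf_visited r q' \<longrightarrow> \<alpha> q \<le> \<alpha> q'))"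

definition buchi_acc :: "'q set \<Rightarrow> (nat \<Rightarrow> 'q) \<Rightarrow> bool" where
  "buchi_acc F r \<longleftrightarrow> (\<exists>q\<in>F. inf_visited r q)"

definition parity_lang :: "('a, 'q) automaton \<Rightarrow> ('q \<Rightarrow> nat) \<Rightarrow> (nat \<Rightarrow> 'a) set" where
  "parity_lang A \<alpha> = {w. is_word A w \<and> (\<exists>r. is_run A w r \<and> parity_acc \<alpha> r)}"

definition buchi_lang :: "('a, 'q) automaton \<Rightarrow> 'q set \<Rightarrow> (nat \<Rightarrow> 'a) set" where
  "buchi_lang A F = {w. is_word A w \<and> (\<exists>r. is_run A w r \<and> buchi_acc F r)}"

definition deterministic :: "('a, 'q) automaton \<Rightarrow> bool" where
  "deterministic A \<longleftrightarrow> card (init A) = 1 \<and> (\<forall>q a. card (trans A q a) \<le> 1 \<and> finite (trans A q a))"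

definition unambiguous_parity :: "('a, 'q) automaton \<Rightarrow> ('q \<Rightarrow> nat) \<Rightarrow> bool" where
  "unambiguous_parity A \<alpha> \<longleftrightarrow>
     (\<forall>w \<in> parity_lang A \<alpha>. \<exists>!r. is_run A w r \<and> parity_acc \<alpha> r)"

definition DBW_realizable :: "'a set \<Rightarrow> (nat \<Rightarrow> 'a) set \<Rightarrow> bool" where
  "DBW_realizable \<Sigma> L \<longleftrightarrow>
     (\<exists>(D :: ('a, nat) automaton) F. alph D = \<Sigma> \<and> well_formed D \<and> deterministic D \<and>
        F \<subseteq> states D \<and> buchi_lang D F = L)"

end

theory Submission
  imports Defs "HOL-Library.Infinite_Set"
begin

definition tA :: "nat \<Rightarrow> nat \<Rightarrow> nat set" where
"tA q x = (if x = 0 then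
   (if q = 0 then {3} else if q = 1 then {1} else if q = 2 then {} else if q = 3 then {3}
    else if q = 4 then {7} else if q = 5 then {6} else if q = 6 then {3} else if q = 7 then {7}
    else if q = 8 then {7} else {})
  else
   (if q = 0 then {2,4} else if q = 1 then {2} else if q = 2 then {1} else if q = 3 then {4}
    else if q = 4 then {5} else if q = 5 then {4} else if q = 6 then {4} else if q = 7 then {8}
    else if q = 8 then {8} else {}))"

definition aA :: "nat \<Rightarrow> nat" where
"aA q = (if q = 1 then 2 else if q = 6 \<or> q = 7 then 0 else 1)"

definition AA :: "(nat, nat) automaton" where
"AA = \<lparr>alph = {0,1}, states = {0..8}, init = {0}, trans = tA\<rparr>"

definition tD :: "nat \<Rightarrow> nat \<Rightarrow> nat set" where
"tD q x = (if q = 0 then (if x = 0 then {3} else {10})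
   else if q = 9 \<or> q = 10 then (if x = 0 then {9} else {10}) else tA q x)"

definition DD :: "(nat, nat) automaton" where
"DD = \<lparr>alph = {0,1}, states = {0..10}, init = {0}, trans = tD\<rparr>"

definition FD :: "nat set" where "FD = {6,7,9}"

definition stepP :: "nat \<Rightarrow> nat \<Rightarrow> nat" where
"stepP q x = (if x = 0 then (if q = 0 then 3 else if q = 3 then 3 else if q = 4 then 7
     else if q = 5 then 6 else if q = 6 then 3 else 7)
   else (if q = 0 then 4 else if q = 3 then 4 else if q = 4 then 5 else if q = 5 then 4
     else if q = 6 then 4 else 8))"

primrec pr :: "(nat \<Rightarrow> nat) \<Rightarrow> nat \<Rightarrow> nat" where
  "pr w 0 = 0"
| "pr w (Suc t) = stepP (pr w t) (w t)"

lemma inf_iff: "inf_visited r q \<longleftrightarrow> (\<forall>m. \<exists>n>m. r n = q)"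
  by (simp add: inf_visited_def INFM_nat)

lemma runA: "is_run AA w r \<longleftrightarrow> r 0 = 0 \<and> (\<forall>i. r (Suc i) \<in> tA (r i) (w i))"
  by (simp add: is_run_def AA_def)

lemma runD: "is_run DD w r \<longleftrightarrow> r 0 = 0 \<and> (\<forall>i. r (Suc i) \<in> tD (r i) (w i))"
  by (simp add: is_run_def DD_def)

lemma wordA: "is_word AA w \<longleftrightarrow> (\<forall>i. w i = 0 \<or> w i = 1)"
  by (auto simp: is_word_def AA_def)

lemma wordD: "is_word DD w \<longleftrightarrow> (\<forall>i. w i = 0 \<or> w i = 1)"
  by (auto simp: is_word_def DD_def)


lemma L1: "6 \<in> tA q x \<Longrightarrow> q = 5 \<and> x = 0"
  unfolding tA_def by (simp split: if_split_asm)
lemma L2: "5 \<in> tA q x \<Longrightarrow> q = 4 \<and> x \<noteq> 0"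
  unfolding tA_def by (simp split: if_split_asm)
lemma L3: "7 \<in> tA q x \<Longrightarrow> x = 0"
  unfolding tA_def by (simp split: if_split_asm)
lemma L4: "0 \<notin> tA q x"
  unfolding tA_def by simp
lemma L1x: "1 \<in> tA 1 x \<Longrightarrow> x = 0"
  unfolding tA_def by (simp split: if_split_asm)
lemma tA_sub: "q \<noteq> 0 \<Longrightarrow> tA q x = {} \<or> (\<exists>s. tA q x = {s})"
  unfolding tA_def by simp
lemma L5: "q \<noteq> 0 \<Longrightarrow> y \<in> tA q x \<Longrightarrow> z \<in> tA q x \<Longrightarrow> y = z"
  using tA_sub[of q x] by auto
lemma aA_even: "even (aA q) \<longleftrightarrow> q = 1 \<or> q = 6 \<or> q = 7"
  by (simp add: aA_def)
lemma aA_ge2: "2 \<le> aA q \<longleftrightarrow> q = 1"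
  by (simp add: aA_def)
lemma aA_vals: "aA 1 = 2" "aA 6 = 0" "aA 7 = 0"
  by (simp_all add: aA_def)

lemma pacc_iff: "parity_acc aA r \<longleftrightarrow> inf_visited r 6 \<or> inf_visited r 7 \<or>
   (inf_visited r 1 \<and> (\<forall>q'. inf_visited r q' \<longrightarrow> q' = 1))"
proof
  assume "parity_acc aA r"
  then obtain q where q: "inf_visited r q" "even (aA q)" "\<forall>q'. inf_visited r q' \<longrightarrow> aA q \<le> aA q'"
    unfolding parity_acc_def by blast
  show "inf_visited r 6 \<or> inf_visited r 7 \<or> (inf_visited r 1 \<and> (\<forall>q'. inf_visited r q' \<longrightarrow> q' = 1))"
  proof (cases "q = 1")
    case True
    have "\<forall>q'. inf_visited r q' \<longrightarrow> q' = 1"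
    proof (intro allI impI)
      fix q' assume "inf_visited r q'"
      then have "aA q \<le> aA q'" using q(3) by blast
      with True have "2 \<le> aA q'" unfolding aA_def by simp
      then show "q' = 1" using aA_ge2 by blast
    qed
    with q(1) True show ?thesis by blast
  next
    case False
    with q(2) have "q = 6 \<or> q = 7" by (simp add: aA_even)
    with q(1) show ?thesis by blast
  qed
next
  assume h: "inf_visited r 6 \<or> inf_visited r 7 \<or> (inf_visited r 1 \<and> (\<forall>q'. inf_visited r q' \<longrightarrow> q' = 1))"
  show "parity_acc aA r"
    unfolding parity_acc_def
  proof -
    consider "inf_visited r 6" | "inf_visited r 7" | "inf_visited r 1" "\<forall>q'. inf_visited r q' \<longrightarrow> q' = 1"
      using h by blast
    then show "\<exists>q. inf_visited r q \<and> even (aA q) \<and> (\<forall>q'. inf_visited r q' \<longrightarrow> aA q \<le> aA q')"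
    proof cases
      case 1 then show ?thesis by (intro exI[of _ 6] conjI) (simp_all add: aA_def)
    next
      case 2 then show ?thesis by (intro exI[of _ 7] conjI) (simp_all add: aA_def)
    next
      case 3
      show ?thesis
      proof (intro exI[of _ 1] conjI allI impI)
        show "inf_visited r 1" using 3(1) .
        show "even (aA 1)" by (simp add: aA_def)
        fix q' assume "inf_visited r q'"
        then have "q' = 1" using 3(2) by blast
        then show "aA 1 \<le> aA q'" by simp
      qed
    qed
  qed
qed

lemma stepP_in: "q \<in> {0,3,4,5,6,7,8} \<Longrightarrow> stepP q x \<in> tA q x"
  unfolding stepP_def tA_def by auto
lemma stepP_range: "stepP q x \<in> {3,4,5,6,7,8}"
  unfolding stepP_def by auto
lemma pr_Suc_range: "pr w (Suc t) \<in> {3,4,5,6,7,8}"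
  using stepP_range by simp
lemma pr_range: "pr w t \<in> {0,3,4,5,6,7,8}"
  using pr_Suc_range by (cases t) auto
lemma pr_run: "pr w (Suc i) \<in> tA (pr w i) (w i)"
  using stepP_in pr_range by simp
lemma pr1: "pr w (Suc 0) = (if w 0 = 0 then 3 else 4)"
  by (simp add: stepP_def)
lemma pr_isrun: "is_run AA w (pr w)"
  using pr_run by (simp add: runA)

lemma runs_eq:
  assumes "r1 0 = 0" "r2 0 = 0" "\<forall>i. r1 (Suc i) \<in> tA (r1 i) (w i)"
    "\<forall>i. r2 (Suc i) \<in> tA (r2 i) (w i)" "r1 (Suc 0) = r2 (Suc 0)"
  shows "r1 = r2"
proof
  fix n show "r1 n = r2 n"
  proof (induction n)
    case 0 thus ?case using assms by simp
  next
    case (Suc n)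
    show ?case
    proof (cases n)
      case 0 thus ?thesis using assms by simp
    next
      case (Suc m)
      have "r1 n \<noteq> 0" using assms(3) L4 Suc by metis
      thus ?thesis using L5 assms(3,4) \<open>r1 n = r2 n\<close> by metis
    qed
  qed
qed

lemma acc_inf_a:
  assumes run: "\<forall>i. r (Suc i) \<in> tA (r i) (w i)" and acc: "parity_acc aA r"
  shows "\<forall>m. \<exists>n>m. w n = 0"
proof
  fix m
  consider "inf_visited r 6" | "inf_visited r 7" | "inf_visited r 1" "\<forall>q'. inf_visited r q' \<longrightarrow> q' = 1"
    using acc pacc_iff by blast
  then show "\<exists>n>m. w n = 0"
  proof cases
    case 1
    then obtain n where n: "n > Suc m" "r n = 6" by (auto simp: inf_iff)
    then obtain k where k: "n = Suc k" by (cases n) auto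
    with n run have "6 \<in> tA (r k) (w k)" by metis
    with L1 have "w k = 0" by blast
    with n k show ?thesis by auto
  next
    case 2
    then obtain n where n: "n > Suc m" "r n = 7" by (auto simp: inf_iff)
    then obtain k where k: "n = Suc k" by (cases n) auto
    with n run have "7 \<in> tA (r k) (w k)" by metis
    with L3 have "w k = 0" by blast
    with n k show ?thesis by auto
  next
    case 3
    have "\<not> inf_visited r 2" using 3(2) by auto
    then obtain M where M: "\<forall>n>M. r n \<noteq> 2" by (auto simp: inf_iff)
    from 3(1) obtain n where n: "n > max m M" "r n = 1" unfolding inf_iff by blast
    have "r (Suc n) \<in> tA 1 (w n)" using run n by metis
    moreover have "r (Suc n) \<noteq> 2" using M n by auto
    ultimately have "w n = 0" by (auto simp: tA_def split: if_splits)
    with n show ?thesis by auto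
  qed
qed


lemma sP45a: "q \<in> {4,5} \<Longrightarrow> stepP q 0 \<in> {6,7}" by (auto simp: stepP_def)
lemma sP45b: "q \<in> {4,5} \<Longrightarrow> stepP q 1 \<in> {4,5}" by (auto simp: stepP_def)
lemma sPb: "q \<in> {0,3,4,5,6} \<Longrightarrow> stepP q 1 \<in> {4,5}" by (auto simp: stepP_def)
lemma prS: "pr w (Suc t) = stepP (pr w t) (w t)" by simp

lemma pr_78_stay: "pr w t \<in> {7,8} \<Longrightarrow> pr w (t + k) \<in> {7,8}"
  by (induction k) (auto simp: stepP_def)

lemma exist_b:
  assumes word: "\<forall>i. w i = 0 \<or> w i = 1" and w0: "w 0 = 1" and infa: "\<forall>m. \<exists>n>m. w n = 0"
  shows "\<exists>r. is_run AA w r \<and> parity_acc aA r"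
proof (cases "parity_acc aA (pr w)")
  case True thus ?thesis using pr_isrun by blast
next
  case False
  hence n6: "\<not> inf_visited (pr w) 6" and n7: "\<not> inf_visited (pr w) 7" using pacc_iff by blast+
  have no78: "pr w t \<noteq> 7 \<and> pr w t \<noteq> 8" for t
  proof (rule ccontr)
    assume "\<not> (pr w t \<noteq> 7 \<and> pr w t \<noteq> 8)"
    hence "pr w t \<in> {7,8}" by blast
    hence st: "pr w (t + k) \<in> {7,8}" for k using pr_78_stay by blast
    have "inf_visited (pr w) 7" unfolding inf_iff
    proof
      fix m
      obtain n where n: "n > m + t" "w n = 0" using infa by blast
      have "pr w (t + (n - t)) \<in> {7,8}" using st by blast
      hence "pr w n \<in> {7,8}" using n by simp
      hence "pr w (Suc n) = 7" using n by (auto simp: stepP_def)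
      thus "\<exists>n'>m. pr w n' = 7" using n by (intro exI[of _ "Suc n"]) auto
    qed
    with n7 show False by blast
  qed
  obtain M where M: "\<forall>n>M. pr w n \<noteq> 6" using n6 unfolding inf_iff by blast
  have fin_b: "w t = 0" if tM: "t > M" for t
  proof (rule ccontr)
    assume "w t \<noteq> 0"
    hence wt: "w t = 1" using word[rule_format, of t] by simp
    have bk: "w (t + k) = 1 \<and> pr w (Suc (t + k)) \<in> {4,5}" for k
    proof (induction k)
      case 0
      have "pr w t \<in> {0,3,4,5,6}" using pr_range[of w t] no78[of t] by auto
      hence "stepP (pr w t) 1 \<in> {4,5}" by (rule sPb)
      thus ?case using wt prS[of w t] by simp
    next
      case (Suc k)
      hence p: "pr w (Suc (t+k)) \<in> {4,5}" by blast
      have "w (Suc (t+k)) = 1"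
      proof (rule ccontr)
        assume "w (Suc (t + k)) \<noteq> 1"
        hence w0': "w (Suc (t+k)) = 0" using word[rule_format, of "Suc (t+k)"] by simp
        have "stepP (pr w (Suc (t+k))) 0 \<in> {6,7}" using p by (rule sP45a)
        hence "pr w (Suc (Suc (t+k))) \<in> {6,7}" using w0' prS[of w "Suc (t+k)"] by simp
        moreover have "Suc (Suc (t+k)) > M" using tM by simp
        hence "pr w (Suc (Suc (t+k))) \<noteq> 6" using M by blast
        ultimately show False using no78 by blast
      qed
      moreover have "stepP (pr w (Suc (t+k))) 1 \<in> {4,5}" using p by (rule sP45b)
      ultimately show ?case using prS[of w "Suc (t+k)"] by simp
    qed
    obtain n where n: "n > t" "w n = 0" using infa by blast
    have "w (t + (n - t)) = 1" using bk by blast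
    with n show False by simp
  qed
  define cr where "cr t = (if t = 0 then 0 else if pr w t = 4 then 2 else (1::nat))" for t
  have crrun: "cr (Suc i) \<in> tA (cr i) (w i)" for i
  proof (cases i)
    case 0 thus ?thesis using w0 by (simp add: cr_def stepP_def tA_def)
  next
    case (Suc j)
    have p: "pr w i \<in> {3,4,5,6}" using pr_Suc_range[of w j] no78[of i] Suc by auto
    show ?thesis
    proof (cases "pr w i = 4")
      case True
      have "w i \<noteq> 0"
      proof
        assume "w i = 0"
        hence "pr w (Suc i) = 7" using True by (simp add: stepP_def)
        with no78 show False by blast
      qed
      hence "w i = 1" using word[rule_format, of i] by simp
      thus ?thesis using True Suc by (simp add: cr_def stepP_def tA_def)
    next
      case False
      have "w i = 0 \<or> w i = 1" using word by blast
      thus ?thesis using p False Suc by (auto simp: cr_def stepP_def tA_def)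
    qed
  qed
  have cr_ev: "cr t = 1" if tS: "t > Suc M" for t
  proof -
    obtain j where j: "t = Suc j" using tS by (cases t) auto
    have "w j = 0" using fin_b j tS by auto
    hence "pr w t \<noteq> 4" using j by (auto simp: stepP_def)
    thus ?thesis using j by (simp add: cr_def)
  qed
  have "parity_acc aA cr"
    unfolding pacc_iff
  proof (intro disjI2 conjI allI impI)
    show "inf_visited cr 1" unfolding inf_iff
    proof
      fix m show "\<exists>n>m. cr n = 1" using cr_ev[of "m + M + 2"] by (intro exI[of _ "m + M + 2"]) auto
    qed
    fix q' assume "inf_visited cr q'"
    then obtain n where "n > Suc M" "cr n = q'" unfolding inf_iff by blast
    thus "q' = 1" using cr_ev by auto
  qed
  moreover have "is_run AA w cr" using crrun by (simp add: runA cr_def)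
  ultimately show ?thesis by blast
qed

lemma no_two:
  assumes r1: "r1 0 = 0" "\<forall>i. r1 (Suc i) \<in> tA (r1 i) (w i)" "r1 (Suc 0) = 2"
  and r2: "r2 0 = 0" "\<forall>i. r2 (Suc i) \<in> tA (r2 i) (w i)" "r2 (Suc 0) = 4"
  and word: "\<forall>i. w i = 0 \<or> w i = 1"
  and a1: "parity_acc aA r1" and a2: "parity_acc aA r2"
  shows False
proof -
  have inv: "(r1 (Suc t) = 2 \<and> r2 (Suc t) = 4) \<or> (r1 (Suc t) = 1 \<and> r2 (Suc t) \<in> {3,5,6})" for t
  proof (induction t)
    case 0 thus ?case using r1 r2 by simp
  next
    case (Suc t)
    have s1: "r1 (Suc (Suc t)) \<in> tA (r1 (Suc t)) (w (Suc t))" using r1 by blast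
    have s2: "r2 (Suc (Suc t)) \<in> tA (r2 (Suc t)) (w (Suc t))" using r2 by blast
    have "w (Suc t) = 0 \<or> w (Suc t) = 1" using word by blast
    thus ?case using Suc.IH s1 s2 by (auto simp: tA_def)
  qed
  have r1r: "r1 n \<in> {0,1,2}" for n using inv[of "n - 1"] r1(1) by (cases n) auto
  have r1s: "r1 (Suc n) \<in> {1,2}" for n using inv[of n] by auto
  have r2r: "r2 n \<noteq> 1 \<and> r2 n \<noteq> 7" for n using inv[of "n - 1"] r2(1) by (cases n) auto
  have r167: "r1 n \<noteq> 6 \<and> r1 n \<noteq> 7" for n using r1r[of n] by auto
  have n6: "\<not> inf_visited r1 6" unfolding inf_iff using r167 by blast
  have n7: "\<not> inf_visited r1 7" unfolding inf_iff using r167 by blast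
  have "\<not> inf_visited r1 2" using a1 n6 n7 unfolding pacc_iff by auto
  then obtain M where M: "\<forall>n>M. r1 n \<noteq> 2" unfolding inf_iff by blast
  have wz: "w n = 0" if "n > M" for n
  proof -
    have "r1 (Suc n) = 1" using r1s[of n] M that by auto
    moreover have "r1 n = 1" using r1s[of "n - 1"] M that by (cases n) auto
    ultimately have "1 \<in> tA 1 (w n)" using r1(2) by metis
    thus ?thesis using L1x by blast
  qed
  have m1: "\<not> inf_visited r2 1" unfolding inf_iff using r2r by blast
  have m7: "\<not> inf_visited r2 7" unfolding inf_iff using r2r by blast
  have "inf_visited r2 6" using a2 m1 m7 unfolding pacc_iff by blast
  then obtain n where n: "n > M + 2" "r2 n = 6" unfolding inf_iff by blast
  then obtain k where k: "n = Suc (Suc k)" by (cases n; cases "n - 1") auto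
  have "6 \<in> tA (r2 (Suc k)) (w (Suc k))" using r2(2) n k by metis
  hence "r2 (Suc k) = 5" using L1 by blast
  hence "5 \<in> tA (r2 k) (w k)" using r2(2) by metis
  hence "w k \<noteq> 0" using L2 by blast
  moreover have "w k = 0" using wz n k by auto
  ultimately show False by blast
qed

lemma unamb: "unambiguous_parity AA aA"
  unfolding unambiguous_parity_def
proof (intro ballI)
  fix w assume "w \<in> parity_lang AA aA"
  then have word: "\<forall>i. w i = 0 \<or> w i = 1" and ex: "\<exists>r. is_run AA w r \<and> parity_acc aA r"
    by (auto simp: parity_lang_def wordA)
  show "\<exists>!r. is_run AA w r \<and> parity_acc aA r"
  proof (rule ex_ex1I[OF ex])
    fix r1 r2 assume h1: "is_run AA w r1 \<and> parity_acc aA r1" and h2: "is_run AA w r2 \<and> parity_acc aA r2"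
    hence R1: "r1 0 = 0" "\<forall>i. r1 (Suc i) \<in> tA (r1 i) (w i)"
      and R2: "r2 0 = 0" "\<forall>i. r2 (Suc i) \<in> tA (r2 i) (w i)" by (auto simp: runA)
    have t1: "r1 (Suc 0) \<in> tA 0 (w 0)" using R1 by metis
    have t2: "r2 (Suc 0) \<in> tA 0 (w 0)" using R2 by metis
    show "r1 = r2"
    proof (cases "r1 (Suc 0) = r2 (Suc 0)")
      case True thus ?thesis using runs_eq R1 R2 by blast
    next
      case False
      have "w 0 = 0 \<or> w 0 = 1" using word by blast
      then have "(r1 (Suc 0) = 2 \<and> r2 (Suc 0) = 4) \<or> (r1 (Suc 0) = 4 \<and> r2 (Suc 0) = 2)"
        using False t1 t2 by (auto simp: tA_def)
      thus ?thesis
      proof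
        assume "r1 (Suc 0) = 2 \<and> r2 (Suc 0) = 4"
        thus ?thesis using no_two[of r1 w r2] R1 R2 word h1 h2 by blast
      next
        assume "r1 (Suc 0) = 4 \<and> r2 (Suc 0) = 2"
        thus ?thesis using no_two[of r2 w r1] R1 R2 word h1 h2 by blast
      qed
    qed
  qed
qed


lemma tD_sub: "tD q x = {} \<or> (\<exists>s. tD q x = {s})"
proof (cases "q = 0 \<or> q = 9 \<or> q = 10")
  case True thus ?thesis unfolding tD_def by auto
next
  case False
  hence "tD q x = tA q x" unfolding tD_def by auto
  thus ?thesis using tA_sub[of q x] False by auto
qed

lemma tD_uniq: "y \<in> tD q x \<Longrightarrow> z \<in> tD q x \<Longrightarrow> y = z"
  using tD_sub[of q x] by auto

lemma runsD_eq:
  assumes "r1 0 = 0" "r2 0 = 0" "\<forall>i. r1 (Suc i) \<in> tD (r1 i) (w i)"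
    "\<forall>i. r2 (Suc i) \<in> tD (r2 i) (w i)"
  shows "r1 = r2"
proof
  fix n show "r1 n = r2 n"
  proof (induction n)
    case 0 thus ?case using assms by simp
  next
    case (Suc n)
    thus ?case using tD_uniq assms(3,4) by metis
  qed
qed

lemma prD_run: "w 0 = 0 \<Longrightarrow> pr w (Suc i) \<in> tD (pr w i) (w i)"
proof (cases i)
  case 0
  assume "w 0 = 0" thus ?thesis using 0 by (simp add: stepP_def tD_def)
next
  case (Suc j)
  have p: "pr w i \<in> {3,4,5,6,7,8}" using pr_Suc_range[of w j] Suc by simp
  hence "tD (pr w i) (w i) = tA (pr w i) (w i)" unfolding tD_def by auto
  thus ?thesis using pr_run[of w i] by simp
qed

definition dr :: "(nat \<Rightarrow> nat) \<Rightarrow> nat \<Rightarrow> nat" where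
  "dr w t = (if t = 0 then 0 else if w (t - 1) = 0 then 9 else 10)"

lemma drD_run: "w 0 = 1 \<Longrightarrow> dr w (Suc i) \<in> tD (dr w i) (w i)"
  by (cases i) (auto simp: dr_def tD_def)

lemma tA_le: "tA q x \<subseteq> {0..8}"
  unfolding tA_def by auto

lemma tD_le: "tD q x \<subseteq> {0..10}"
  using tA_le[of q x] unfolding tD_def by auto

lemma pr_no: "pr w n \<noteq> 1 \<and> pr w n \<noteq> 9"
  using pr_range[of w n] by auto

lemma lang_eq: "buchi_lang DD FD = parity_lang AA aA"
proof (rule set_eqI)
  fix w
  show "w \<in> buchi_lang DD FD \<longleftrightarrow> w \<in> parity_lang AA aA"
  proof (cases "\<forall>i. w i = 0 \<or> w i = 1")
    case False
    thus ?thesis unfolding buchi_lang_def parity_lang_def wordA wordD by blast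
  next
    case word: True
    have eq: "(\<exists>r. is_run DD w r \<and> buchi_acc FD r) \<longleftrightarrow> (\<exists>r. is_run AA w r \<and> parity_acc aA r)"
    proof (cases "w 0 = 0")
      case True
      have n1: "\<not> inf_visited (pr w) 1" and n9: "\<not> inf_visited (pr w) 9"
        unfolding inf_iff using pr_no by blast+
      have A: "(\<exists>r. is_run AA w r \<and> parity_acc aA r) \<longleftrightarrow> inf_visited (pr w) 6 \<or> inf_visited (pr w) 7"
      proof
        assume "\<exists>r. is_run AA w r \<and> parity_acc aA r"
        then obtain r where r: "is_run AA w r" "parity_acc aA r" by blast
        hence R: "r 0 = 0" "\<forall>i. r (Suc i) \<in> tA (r i) (w i)" by (auto simp: runA)
        have "r (Suc 0) \<in> tA 0 (w 0)" using R by metis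
        hence "r (Suc 0) = 3" using True by (simp add: tA_def)
        moreover have "pr w (Suc 0) = 3" using True by (simp add: stepP_def)
        ultimately have "r = pr w" using runs_eq[of r "pr w" w] R pr_run by simp
        thus "inf_visited (pr w) 6 \<or> inf_visited (pr w) 7" using r(2) n1 pacc_iff by auto
      next
        assume "inf_visited (pr w) 6 \<or> inf_visited (pr w) 7"
        thus "\<exists>r. is_run AA w r \<and> parity_acc aA r" using pr_isrun pacc_iff by blast
      qed
      have prD: "is_run DD w (pr w)" using prD_run True by (simp add: runD)
      have D: "(\<exists>r. is_run DD w r \<and> buchi_acc FD r) \<longleftrightarrow> inf_visited (pr w) 6 \<or> inf_visited (pr w) 7"
      proof
        assume "\<exists>r. is_run DD w r \<and> buchi_acc FD r"
        then obtain r where r: "is_run DD w r" "buchi_acc FD r" by blast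
        have "r = pr w" using runsD_eq[of r "pr w" w] r(1) prD by (simp add: runD)
        thus "inf_visited (pr w) 6 \<or> inf_visited (pr w) 7" using r(2) n9 by (auto simp: buchi_acc_def FD_def)
      next
        assume "inf_visited (pr w) 6 \<or> inf_visited (pr w) 7"
        thus "\<exists>r. is_run DD w r \<and> buchi_acc FD r" using prD by (auto simp: buchi_acc_def FD_def)
      qed
      show ?thesis using A D by blast
    next
      case False
      hence w0: "w 0 = 1" using word[rule_format, of 0] by simp
      have A: "(\<exists>r. is_run AA w r \<and> parity_acc aA r) \<longleftrightarrow> (\<forall>m. \<exists>n>m. w n = 0)"
        using exist_b[OF word w0] acc_inf_a by (auto simp: runA)
      have drD: "is_run DD w (dr w)" using drD_run[of w] w0 by (simp add: runD dr_def)
      have dr_inf: "inf_visited (dr w) 9 \<longleftrightarrow> (\<forall>m. \<exists>n>m. w n = 0)"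
        unfolding inf_iff
      proof
        assume h: "\<forall>m. \<exists>n>m. dr w n = 9"
        show "\<forall>m. \<exists>n>m. w n = 0"
        proof
          fix m
          obtain n where n: "n > Suc m" "dr w n = 9" using h by blast
          hence "w (n - 1) = 0" by (auto simp: dr_def split: if_splits)
          thus "\<exists>n>m. w n = 0" using n by (intro exI[of _ "n - 1"]) auto
        qed
      next
        assume h: "\<forall>m. \<exists>n>m. w n = 0"
        show "\<forall>m. \<exists>n>m. dr w n = 9"
        proof
          fix m
          obtain n where n: "n > m" "w n = 0" using h by blast
          thus "\<exists>n>m. dr w n = 9" by (intro exI[of _ "Suc n"]) (auto simp: dr_def)
        qed
      qed
      have dr67: "\<not> inf_visited (dr w) 6 \<and> \<not> inf_visited (dr w) 7"
        unfolding inf_iff by (auto simp: dr_def)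
      have D: "(\<exists>r. is_run DD w r \<and> buchi_acc FD r) \<longleftrightarrow> (\<forall>m. \<exists>n>m. w n = 0)"
      proof
        assume "\<exists>r. is_run DD w r \<and> buchi_acc FD r"
        then obtain r where r: "is_run DD w r" "buchi_acc FD r" by blast
        have "r = dr w" using runsD_eq[of r "dr w" w] r(1) drD by (simp add: runD)
        thus "\<forall>m. \<exists>n>m. w n = 0" using r(2) dr67 dr_inf by (auto simp: buchi_acc_def FD_def)
      next
        assume "\<forall>m. \<exists>n>m. w n = 0"
        thus "\<exists>r. is_run DD w r \<and> buchi_acc FD r" using drD dr_inf by (auto simp: buchi_acc_def FD_def)
      qed
      show ?thesis using A D by blast
    qed
    show ?thesis using eq word by (simp add: buchi_lang_def parity_lang_def wordA wordD)
  qed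
qed


lemma not_buchi: "\<not> (\<exists>\<alpha>'. \<alpha>' \<subseteq> states AA \<and> buchi_lang AA \<alpha>' = parity_lang AA aA)"
proof
  assume "\<exists>\<alpha>'. \<alpha>' \<subseteq> states AA \<and> buchi_lang AA \<alpha>' = parity_lang AA aA"
  then obtain F where F: "buchi_lang AA F = parity_lang AA aA" by blast
  consider "1 \<in> F" | "3 \<in> F" | "1 \<notin> F" "3 \<notin> F" by blast
  then show False
  proof cases
    case 1
    define wb :: "nat \<Rightarrow> nat" where "wb = (\<lambda>_. 1)"
    define rb :: "nat \<Rightarrow> nat" where "rb t = (if t = 0 then 0 else if odd t then 2 else 1)" for t
    have "rb (Suc i) \<in> tA (rb i) (wb i)" for i
      by (cases i) (auto simp: rb_def wb_def tA_def)
    hence run: "is_run AA wb rb" by (simp add: runA rb_def)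
    have "inf_visited rb 1" unfolding inf_iff
    proof
      fix m show "\<exists>n>m. rb n = 1" by (intro exI[of _ "2 * m + 2"]) (auto simp: rb_def)
    qed
    hence "wb \<in> buchi_lang AA F" using run 1
      by (auto simp: buchi_lang_def buchi_acc_def wordA wb_def)
    hence "wb \<in> parity_lang AA aA" using F by simp
    then obtain r where "is_run AA wb r" "parity_acc aA r" by (auto simp: parity_lang_def)
    hence "\<forall>m. \<exists>n>m. wb n = 0" using acc_inf_a by (auto simp: runA)
    thus False by (auto simp: wb_def)
  next
    case 2
    define wa :: "nat \<Rightarrow> nat" where "wa = (\<lambda>_. 0)"
    define ra :: "nat \<Rightarrow> nat" where "ra t = (if t = 0 then 0 else 3)" for t
    have rastep: "\<forall>i. ra (Suc i) \<in> tA (ra i) (wa i)"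
      by (auto simp: ra_def wa_def tA_def)
    hence run: "is_run AA wa ra" by (simp add: runA ra_def)
    have "inf_visited ra 3" unfolding inf_iff
    proof
      fix m show "\<exists>n>m. ra n = 3" by (intro exI[of _ "Suc m"]) (auto simp: ra_def)
    qed
    hence "wa \<in> buchi_lang AA F" using run 2
      by (auto simp: buchi_lang_def buchi_acc_def wordA wa_def)
    hence "wa \<in> parity_lang AA aA" using F by simp
    then obtain r where r: "is_run AA wa r" "parity_acc aA r" by (auto simp: parity_lang_def)
    hence R: "r 0 = 0" "\<forall>i. r (Suc i) \<in> tA (r i) (wa i)" by (auto simp: runA)
    have "r (Suc 0) \<in> tA 0 (wa 0)" using R by metis
    hence "r (Suc 0) = ra (Suc 0)" by (simp add: tA_def wa_def ra_def)
    hence "r = ra" using runs_eq[of r ra wa] R rastep by (simp add: ra_def)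
    moreover have "\<not> inf_visited ra 6" "\<not> inf_visited ra 7" "\<not> inf_visited ra 1"
      unfolding inf_iff by (auto simp: ra_def)
    ultimately show False using r(2) pacc_iff by blast
  next
    case 3
    define w1 :: "nat \<Rightarrow> nat" where "w1 t = (if t < 2 then 1 else 0)" for t
    have word: "\<forall>i. w1 i = 0 \<or> w1 i = 1" by (simp add: w1_def)
    have "\<forall>m. \<exists>n>m. w1 n = 0"
    proof
      fix m show "\<exists>n>m. w1 n = 0" by (intro exI[of _ "m + 2"]) (auto simp: w1_def)
    qed
    moreover have "w1 0 = 1" by (simp add: w1_def)
    ultimately have "\<exists>r. is_run AA w1 r \<and> parity_acc aA r" using exist_b[OF word] by blast
    hence "w1 \<in> parity_lang AA aA" using word by (simp add: parity_lang_def wordA)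
    hence "w1 \<in> buchi_lang AA F" using F by simp
    then obtain r q where r: "is_run AA w1 r" "q \<in> F" "inf_visited r q"
      by (auto simp: buchi_lang_def buchi_acc_def)
    hence R: "r 0 = 0" "\<forall>i. r (Suc i) \<in> tA (r i) (w1 i)" by (auto simp: runA)
    have s1: "r 1 \<in> {2,4}" using R(2)[rule_format, of 0] R(1) by (simp add: w1_def tA_def)
    have s2: "r 2 \<in> {1,5}" using R(2)[rule_format, of 1] s1 by (auto simp: w1_def tA_def numeral_2_eq_2)
    have s3: "r 3 \<in> {1,6}" using R(2)[rule_format, of 2] s2 by (auto simp: w1_def tA_def numeral_3_eq_3 numeral_2_eq_2)
    have s4: "r 4 \<in> {1,3}"
    proof -
      have "r (Suc 3) \<in> tA (r 3) (w1 3)" using R(2) by blast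
      thus ?thesis using s3 by (auto simp: w1_def tA_def)
    qed
    have sk: "r (4 + k) \<in> {1,3}" for k
    proof (induction k)
      case 0 thus ?case using s4 by simp
    next
      case (Suc k)
      have "r (Suc (4 + k)) \<in> tA (r (4 + k)) (w1 (4 + k))" using R(2) by blast
      thus ?case using Suc.IH by (auto simp: w1_def tA_def)
    qed
    obtain n where n: "n > 4" "r n = q" using r(3) unfolding inf_iff by blast
    have "r (4 + (n - 4)) \<in> {1,3}" using sk by blast
    hence "q \<in> {1,3}" using n by simp
    thus False using 3 r(2) by auto
  qed
qed

theorem proposition7:
  shows "\<exists>(A :: (nat, nat) automaton) (\<alpha> :: nat \<Rightarrow> nat).
           well_formed A \<and> unambiguous_parity A \<alpha> \<and>
           DBW_realizable (alph A) (parity_lang A \<alpha>) \<and>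
           \<not> (\<exists>\<alpha>'. \<alpha>' \<subseteq> states A \<and> buchi_lang A \<alpha>' = parity_lang A \<alpha>)"
proof (intro exI[of _ AA] exI[of _ aA] conjI)
  show "well_formed AA"
    unfolding well_formed_def AA_def using tA_le by auto
  show "unambiguous_parity AA aA" by (rule unamb)
  show "\<not> (\<exists>\<alpha>'. \<alpha>' \<subseteq> states AA \<and> buchi_lang AA \<alpha>' = parity_lang AA aA)" by (rule not_buchi)
  have wf: "well_formed DD"
    unfolding well_formed_def DD_def using tD_le by auto
  have det: "deterministic DD"
    unfolding deterministic_def
  proof (intro conjI allI)
    show "card (init DD) = 1" by (simp add: DD_def)
    fix q a
    show "card (trans DD q a) \<le> 1" using tD_sub[of q a] by (auto simp: DD_def)
    show "finite (trans DD q a)" using tD_sub[of q a] by (auto simp: DD_def)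
  qed
  show "DBW_realizable (alph AA) (parity_lang AA aA)"
    unfolding DBW_realizable_def
    using wf det lang_eq
    by (intro exI[of _ DD] exI[of _ FD]) (auto simp: DD_def AA_def FD_def)
qed

end
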